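(* There is no contravariant functor $F\colon\mathsf{Ring}\to\mathsf{Set}$ whose restriction to the full subcategory $\mathsf{CommRing}$ is isomorphic to $\operatorname{Spec}$ and such that, for every ring $R$, the set $F(R)$ is in bijection with the set of prime ideals of $R$.
   Context: Rings are unital and homomorphisms preserve the identity. A (two-sided) ideal $P$ of a ring $R$ is prime if $P\neq R$ and for all two-sided ideals $I,J$ with $IJ\subseteq P$, either $I\subseteq P$ or $J\subseteq P$. $\operatorname{Spec}$ is the contravariant functor on commutative rings sending a ring to its set of prime ideals and a homomorphism $f$ to $P\mapsto f^{-1}(P)$. *)

theory Defs
  imports Complex_Main "HOL-Algebra.Ideal_Product"
begin

definition prime_ideal_nc :: "('a, 'b) ring_scheme \<Rightarrow> 'a set \<Rightarrow> bool" where
  "prime_ideal_nc R P \<longleftrightarrow> ideal P R \<and> P \<noteq> carrier R \<and>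
     (\<forall>I J. ideal I R \<longrightarrow> ideal J R \<longrightarrow> ideal_prod R I J \<subseteq> P \<longrightarrow> I \<subseteq> P \<or> J \<subseteq> P)"

definition Spec_set :: "('a, 'b) ring_scheme \<Rightarrow> 'a set set" where
  "Spec_set R = {P. prime_ideal_nc R P}"

text \<open>Morphisms of the category Ring (objects: unital rings whose carrier lives in
  the universe type 'u): unital ring homomorphisms, represented extensionally
  (undefined outside the carrier) so that a morphism is a unique HOL function.\<close>
definition ring_morph :: "('a, 'c) ring_scheme \<Rightarrow> ('b, 'd) ring_scheme \<Rightarrow> ('a \<Rightarrow> 'b) \<Rightarrow> bool" where
  "ring_morph R S h \<longleftrightarrow> h \<in> ring_hom R S \<and> h \<in> extensional (carrier R)"

definition contravariant_functor_Ring ::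
    "('u ring \<Rightarrow> 'v set) \<Rightarrow> ('u ring \<Rightarrow> 'u ring \<Rightarrow> ('u \<Rightarrow> 'u) \<Rightarrow> 'v \<Rightarrow> 'v) \<Rightarrow> bool" where
  "contravariant_functor_Ring Fo Fm \<longleftrightarrow>
     (\<forall>R S h. ring R \<longrightarrow> ring S \<longrightarrow> ring_morph R S h \<longrightarrow> Fm R S h \<in> Fo S \<rightarrow> Fo R) \<and>
     (\<forall>R. ring R \<longrightarrow> (\<forall>x\<in>Fo R. Fm R R (restrict (\<lambda>a. a) (carrier R)) x = x)) \<and>
     (\<forall>R S T h g. ring R \<longrightarrow> ring S \<longrightarrow> ring T \<longrightarrow> ring_morph R S h \<longrightarrow> ring_morph S T g \<longrightarrow>
        (\<forall>x\<in>Fo T. Fm R T (restrict (g \<circ> h) (carrier R)) x = Fm R S h (Fm S T g x)))"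

definition restricts_to_Spec ::
    "('u ring \<Rightarrow> 'v set) \<Rightarrow> ('u ring \<Rightarrow> 'u ring \<Rightarrow> ('u \<Rightarrow> 'u) \<Rightarrow> 'v \<Rightarrow> 'v)
     \<Rightarrow> ('u ring \<Rightarrow> 'v \<Rightarrow> 'u set) \<Rightarrow> bool" where
  "restricts_to_Spec Fo Fm eta \<longleftrightarrow>
     (\<forall>R. cring R \<longrightarrow> bij_betw (eta R) (Fo R) (Spec_set R)) \<and>
     (\<forall>R S h. cring R \<longrightarrow> cring S \<longrightarrow> ring_morph R S h \<longrightarrow>
        (\<forall>x\<in>Fo S. eta R (Fm R S h x) = h -` (eta S x) \<inter> carrier R))"

end

theory Submission
  imports Defs "HOL-Algebra.Subrings" "HOL-Analysis.Analysis" "HOL-Library.Z2" "HOL-Algebra.Weak_Morphisms"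
begin


definition ex1 :: "bool \<Rightarrow> bool \<Rightarrow> bool \<Rightarrow> bool" where
 "ex1 p q r \<longleftrightarrow> (p \<or> q \<or> r) \<and> \<not>(p\<and>q) \<and> \<not>(p\<and>r) \<and> \<not>(q\<and>r)"

definition sel :: "('a,'b) ring_scheme \<Rightarrow> bool \<Rightarrow> 'a \<Rightarrow> 'a" where
 "sel R a e = (if a then e else \<zero>\<^bsub>R\<^esub>)"

definition lin :: "('a,'b) ring_scheme \<Rightarrow> 'a \<Rightarrow> 'a \<Rightarrow> 'a \<Rightarrow> bool \<Rightarrow> bool \<Rightarrow> bool \<Rightarrow> 'a" where
 "lin R e1 e2 e3 a b c = sel R a e1 \<oplus>\<^bsub>R\<^esub> sel R b e2 \<oplus>\<^bsub>R\<^esub> sel R c e3"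

definition frameS :: "('a,'b) ring_scheme \<Rightarrow> 'a \<Rightarrow> 'a \<Rightarrow> 'a \<Rightarrow> 'a set" where
 "frameS R e1 e2 e3 = {lin R e1 e2 e3 a b c | a b c. True}"

locale frame = ring R for R (structure) +
  fixes e1 e2 e3
  assumes char2: "\<And>x. x \<in> carrier R \<Longrightarrow> x \<oplus> x = \<zero>"
  and c1: "e1 \<in> carrier R" and c2: "e2 \<in> carrier R" and c3: "e3 \<in> carrier R"
  and o12: "e1 \<otimes> e2 = \<zero>" and o21: "e2 \<otimes> e1 = \<zero>" and o13: "e1 \<otimes> e3 = \<zero>"
  and o31: "e3 \<otimes> e1 = \<zero>" and o23: "e2 \<otimes> e3 = \<zero>" and o32: "e3 \<otimes> e2 = \<zero>"
  and s: "e1 \<oplus> e2 \<oplus> e3 = \<one>"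
begin

lemma idem: "e1 \<otimes> e1 = e1" "e2 \<otimes> e2 = e2" "e3 \<otimes> e3 = e3"
proof -
  have "e1 = e1 \<otimes> (e1 \<oplus> e2 \<oplus> e3)" using s c1 by simp
  also have "\<dots> = e1 \<otimes> e1" using c1 c2 c3 o12 o13 by (simp add: r_distr)
  finally show "e1 \<otimes> e1 = e1" by simp
  have "e2 = e2 \<otimes> (e1 \<oplus> e2 \<oplus> e3)" using s c2 by simp
  also have "\<dots> = e2 \<otimes> e2" using c1 c2 c3 o21 o23 by (simp add: r_distr)
  finally show "e2 \<otimes> e2 = e2" by simp
  have "e3 = e3 \<otimes> (e1 \<oplus> e2 \<oplus> e3)" using s c3 by simp
  also have "\<dots> = e3 \<otimes> e3" using c1 c2 c3 o31 o32 by (simp add: r_distr)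
  finally show "e3 \<otimes> e3 = e3" by simp
qed

lemma sel_carr: "x \<in> carrier R \<Longrightarrow> sel R a x \<in> carrier R"
  by (simp add: sel_def)

lemma sel_add: "x \<in> carrier R \<Longrightarrow> sel R a x \<oplus> sel R b x = sel R (a \<noteq> b) x"
  by (cases a; cases b) (simp_all add: sel_def char2)

lemma sel_mult: "x \<in> carrier R \<Longrightarrow> y \<in> carrier R \<Longrightarrow> sel R a x \<otimes> sel R b y = sel R (a \<and> b) (x \<otimes> y)"
  by (cases a; cases b) (simp_all add: sel_def)

lemma sel_zero: "sel R a \<zero> = \<zero>"
  by (simp add: sel_def)

lemma rearr: "x1 \<in> carrier R \<Longrightarrow> x2 \<in> carrier R \<Longrightarrow> x3 \<in> carrier R \<Longrightarrow>
  y1 \<in> carrier R \<Longrightarrow> y2 \<in> carrier R \<Longrightarrow> y3 \<in> carrier R \<Longrightarrow>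
  (x1 \<oplus> x2 \<oplus> x3) \<oplus> (y1 \<oplus> y2 \<oplus> y3) = (x1 \<oplus> y1) \<oplus> (x2 \<oplus> y2) \<oplus> (x3 \<oplus> y3)"
  by (simp add: a_ac)

lemma lin_carr: "lin R e1 e2 e3 a b c \<in> carrier R"
  using c1 c2 c3 by (simp add: lin_def sel_carr)

lemma lin_add: "lin R e1 e2 e3 a b c \<oplus> lin R e1 e2 e3 a' b' c' = lin R e1 e2 e3 (a\<noteq>a') (b\<noteq>b') (c\<noteq>c')"
  unfolding lin_def using c1 c2 c3
  by (simp add: rearr sel_carr sel_add)

lemma lin_mult: "lin R e1 e2 e3 a b c \<otimes> lin R e1 e2 e3 a' b' c' = lin R e1 e2 e3 (a\<and>a') (b\<and>b') (c\<and>c')"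
  unfolding lin_def using c1 c2 c3
  by (simp add: sel_carr l_distr r_distr sel_mult idem o12 o21 o13 o31 o23 o32 sel_zero)

lemma sub: "subring (frameS R e1 e2 e3) R"
proof (rule subringI)
  show "frameS R e1 e2 e3 \<subseteq> carrier R" using lin_carr by (auto simp: frameS_def)
  show "\<one> \<in> frameS R e1 e2 e3" unfolding frameS_def
    by (rule CollectI, rule exI[of _ True], rule exI[of _ True], rule exI[of _ True])
       (simp add: lin_def sel_def s)
  fix h assume "h \<in> frameS R e1 e2 e3"
  then obtain a b c where h: "h = lin R e1 e2 e3 a b c" by (auto simp: frameS_def)
  have hc: "h \<in> carrier R" using h lin_carr by simp
  have "\<ominus> h = h" using hc char2 by (intro minus_equality) auto
  then show "\<ominus> h \<in> frameS R e1 e2 e3" using h by (auto simp: frameS_def)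
next
  fix h1 h2 assume "h1 \<in> frameS R e1 e2 e3" "h2 \<in> frameS R e1 e2 e3"
  then show "h1 \<otimes> h2 \<in> frameS R e1 e2 e3" "h1 \<oplus> h2 \<in> frameS R e1 e2 e3"
    by (auto simp: frameS_def lin_mult lin_add) blast+
qed

lemma comm: "cring (R\<lparr>carrier := frameS R e1 e2 e3\<rparr>)"
proof -
  have "subcring (frameS R e1 e2 e3) R"
  proof (rule subcringI[OF sub])
    fix h1 h2 assume "h1 \<in> frameS R e1 e2 e3" "h2 \<in> frameS R e1 e2 e3"
    then show "h1 \<otimes> h2 = h2 \<otimes> h1" by (auto simp: frameS_def lin_mult conj_commute)
  qed
  then show ?thesis using subcring_iff subringE(1)[OF sub] by blast
qed

lemma e_in: "e1 \<in> frameS R e1 e2 e3" "e2 \<in> frameS R e1 e2 e3" "e3 \<in> frameS R e1 e2 e3"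
proof -
  have "e1 = lin R e1 e2 e3 True False False" using c1 c2 c3 by (simp add: lin_def sel_def)
  then show "e1 \<in> frameS R e1 e2 e3" unfolding frameS_def by blast
  have "e2 = lin R e1 e2 e3 False True False" using c1 c2 c3 by (simp add: lin_def sel_def)
  then show "e2 \<in> frameS R e1 e2 e3" unfolding frameS_def by blast
  have "e3 = lin R e1 e2 e3 False False True" using c1 c2 c3 by (simp add: lin_def sel_def)
  then show "e3 \<in> frameS R e1 e2 e3" unfolding frameS_def by blast
qed

lemma prime_ex1:
  assumes "prime_ideal_nc (R\<lparr>carrier := frameS R e1 e2 e3\<rparr>) P"
  shows "ex1 (e1 \<notin> P) (e2 \<notin> P) (e3 \<notin> P)"
proof -
  let ?C = "R\<lparr>carrier := frameS R e1 e2 e3\<rparr>"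
  interpret C: cring ?C by (rule comm)
  have I: "ideal P ?C" and ne: "P \<noteq> carrier ?C"
    and pr: "\<And>I J. ideal I ?C \<Longrightarrow> ideal J ?C \<Longrightarrow> ideal_prod ?C I J \<subseteq> P \<Longrightarrow> I \<subseteq> P \<or> J \<subseteq> P"
    using assms unfolding prime_ideal_nc_def by auto
  interpret P: ideal P ?C by (rule I)
  have one: "\<one> \<notin> P"
  proof
    assume "\<one> \<in> P"
    then have "P = carrier ?C" using P.one_imp_carrier by simp
    then show False using ne by simp
  qed
  have least: "\<not> (e1 \<in> P \<and> e2 \<in> P \<and> e3 \<in> P)"
  proof
    assume "e1 \<in> P \<and> e2 \<in> P \<and> e3 \<in> P"
    then have "e1 \<oplus>\<^bsub>?C\<^esub> e2 \<oplus>\<^bsub>?C\<^esub> e3 \<in> P" by (intro P.a_closed) auto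
    then show False using one s by simp
  qed
  have two: "x \<in> P \<or> y \<in> P" if xc: "x \<in> carrier ?C" and yc: "y \<in> carrier ?C" and xy: "x \<otimes> y = \<zero>" for x y
  proof -
    have "ideal_prod ?C (PIdl\<^bsub>?C\<^esub> x) (PIdl\<^bsub>?C\<^esub> y) \<subseteq> P"
    proof
      fix z assume "z \<in> ideal_prod ?C (PIdl\<^bsub>?C\<^esub> x) (PIdl\<^bsub>?C\<^esub> y)"
      then show "z \<in> P"
      proof (induction rule: ideal_prod.induct)
        case (prod i j)
        then obtain a b where a: "a \<in> carrier ?C" "i = a \<otimes>\<^bsub>?C\<^esub> x"
          and b: "b \<in> carrier ?C" "j = b \<otimes>\<^bsub>?C\<^esub> y" unfolding cgenideal_def by auto
        have cr: "a \<in> carrier R" "b \<in> carrier R" "x \<in> carrier R" "y \<in> carrier R"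
          using a b xc yc subringE(1)[OF sub] by auto
        have xb: "x \<otimes> b = b \<otimes> x" using C.m_comm[of x b] xc b by simp
        have "i \<otimes>\<^bsub>?C\<^esub> j = a \<otimes> (x \<otimes> b) \<otimes> y" using a b cr by (simp add: m_assoc)
        also have "\<dots> = (a \<otimes> b) \<otimes> (x \<otimes> y)" using cr by (simp add: xb m_assoc)
        finally have "i \<otimes>\<^bsub>?C\<^esub> j = (a \<otimes>\<^bsub>?C\<^esub> b) \<otimes>\<^bsub>?C\<^esub> (x \<otimes>\<^bsub>?C\<^esub> y)" by simp
        also have "\<dots> = \<zero>\<^bsub>?C\<^esub>" using xy cr by simp
        finally show ?case using P.zero_closed by simp
      next
        case (sum s1 s2)
        then show ?case using P.a_closed by simp
      qed
    qed
    then have "PIdl\<^bsub>?C\<^esub> x \<subseteq> P \<or> PIdl\<^bsub>?C\<^esub> y \<subseteq> P"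
      using pr C.cgenideal_ideal xc yc by blast
    then show ?thesis using C.cgenideal_self xc yc by blast
  qed
  have ec: "e1 \<in> carrier ?C" "e2 \<in> carrier ?C" "e3 \<in> carrier ?C" using e_in by auto
  show ?thesis unfolding ex1_def
    using least two[OF ec(1) ec(2) o12] two[OF ec(1) ec(3) o13] two[OF ec(2) ec(3) o23] by blast
qed

end

lemma idem_frame:
  assumes "ring R" and char2: "\<And>x. x \<in> carrier R \<Longrightarrow> x \<oplus>\<^bsub>R\<^esub> x = \<zero>\<^bsub>R\<^esub>"
    and e: "e \<in> carrier R" "e \<otimes>\<^bsub>R\<^esub> e = e"
  shows "frame R e (\<one>\<^bsub>R\<^esub> \<ominus>\<^bsub>R\<^esub> e) \<zero>\<^bsub>R\<^esub>"
proof -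
  interpret ring R by fact
  have sum: "e \<oplus>\<^bsub>R\<^esub> (\<one>\<^bsub>R\<^esub> \<oplus>\<^bsub>R\<^esub> \<ominus>\<^bsub>R\<^esub> e) = \<one>\<^bsub>R\<^esub>"
    using e(1) by (metis add.inv_closed one_closed a_lcomm r_neg r_zero)
  show ?thesis
    by unfold_locales (use e char2 in \<open>simp_all add: a_minus_def r_distr l_distr r_minus l_minus r_neg l_neg sum\<close>)
qed

lemma incl_morph:
  assumes "B \<subseteq> carrier T" "\<one>\<^bsub>T\<^esub> \<in> B"
    "\<And>x y. x \<in> B \<Longrightarrow> y \<in> B \<Longrightarrow> x \<otimes>\<^bsub>T\<^esub> y \<in> B"
    "\<And>x y. x \<in> B \<Longrightarrow> y \<in> B \<Longrightarrow> x \<oplus>\<^bsub>T\<^esub> y \<in> B"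
  shows "ring_morph (T\<lparr>carrier := B\<rparr>) T (restrict (\<lambda>a. a) B)"
  using assms unfolding ring_morph_def ring_hom_def by auto

lemma compat:
  fixes R :: "'u ring"
  assumes F: "contravariant_functor_Ring Fo Fm" and Sp: "restricts_to_Spec Fo Fm eta"
    and R: "ring R" and x: "x \<in> Fo R"
    and A: "subring A R" "cring (R\<lparr>carrier:=A\<rparr>)"
    and B: "subring B R" "cring (R\<lparr>carrier:=B\<rparr>)" and BA: "B \<subseteq> A"
  shows "eta (R\<lparr>carrier:=B\<rparr>) (Fm (R\<lparr>carrier:=B\<rparr>) R (restrict (\<lambda>a. a) B) x)
       = eta (R\<lparr>carrier:=A\<rparr>) (Fm (R\<lparr>carrier:=A\<rparr>) R (restrict (\<lambda>a. a) A) x) \<inter> B"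
    and "eta (R\<lparr>carrier:=A\<rparr>) (Fm (R\<lparr>carrier:=A\<rparr>) R (restrict (\<lambda>a. a) A) x) \<in> Spec_set (R\<lparr>carrier:=A\<rparr>)"
proof -
  interpret R: ring R by fact
  let ?CA = "R\<lparr>carrier:=A\<rparr>" and ?CB = "R\<lparr>carrier:=B\<rparr>"
  have rA: "ring ?CA" and rB: "ring ?CB" using A B cring.axioms(1) by blast+
  have mA: "ring_morph ?CA R (restrict (\<lambda>a. a) A)"
    by (rule incl_morph) (use subringE[OF A(1)] in auto)
  have mB: "ring_morph ?CB R (restrict (\<lambda>a. a) B)"
    by (rule incl_morph) (use subringE[OF B(1)] in auto)
  have mBA0: "ring_morph (?CA\<lparr>carrier := B\<rparr>) ?CA (restrict (\<lambda>a. a) B)"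
    by (rule incl_morph) (use subringE[OF B(1)] BA in auto)
  have mBA: "ring_morph ?CB ?CA (restrict (\<lambda>a. a) B)" using mBA0 by simp
  have y: "Fm ?CA R (restrict (\<lambda>a. a) A) x \<in> Fo ?CA"
    using F rA R mA x unfolding contravariant_functor_Ring_def by blast
  have comp: "restrict (restrict (\<lambda>a. a) A \<circ> restrict (\<lambda>a. a) B) (carrier ?CB) = restrict (\<lambda>a. a) B"
    using BA by (auto simp: fun_eq_iff)
  have "Fm ?CB R (restrict (restrict (\<lambda>a. a) A \<circ> restrict (\<lambda>a. a) B) (carrier ?CB)) x
      = Fm ?CB ?CA (restrict (\<lambda>a. a) B) (Fm ?CA R (restrict (\<lambda>a. a) A) x)"
    using F rB rA R mBA mA x unfolding contravariant_functor_Ring_def by blast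
  then have e1: "Fm ?CB R (restrict (\<lambda>a. a) B) x = Fm ?CB ?CA (restrict (\<lambda>a. a) B) (Fm ?CA R (restrict (\<lambda>a. a) A) x)"
    using comp by simp
  have "eta ?CB (Fm ?CB ?CA (restrict (\<lambda>a. a) B) (Fm ?CA R (restrict (\<lambda>a. a) A) x))
      = restrict (\<lambda>a. a) B -` (eta ?CA (Fm ?CA R (restrict (\<lambda>a. a) A) x)) \<inter> carrier ?CB"
    using Sp A(2) B(2) mBA y unfolding restricts_to_Spec_def by blast
  then show "eta ?CB (Fm ?CB R (restrict (\<lambda>a. a) B) x) = eta ?CA (Fm ?CA R (restrict (\<lambda>a. a) A) x) \<inter> B"
    using e1 by auto
  show "eta ?CA (Fm ?CA R (restrict (\<lambda>a. a) A) x) \<in> Spec_set ?CA"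
    using Sp A(2) y unfolding restricts_to_Spec_def bij_betw_def by blast
qed

definition DS :: "('a,'b) ring_scheme \<Rightarrow> 'a \<Rightarrow> 'a set" where
  "DS R e = frameS R e (\<one>\<^bsub>R\<^esub> \<ominus>\<^bsub>R\<^esub> e) \<zero>\<^bsub>R\<^esub>"

definition V where
  "V Fo Fm eta R x e \<longleftrightarrow> e \<notin> eta (R\<lparr>carrier := DS R e\<rparr>) (Fm (R\<lparr>carrier := DS R e\<rparr>) R (restrict (\<lambda>a. a) (DS R e)) x)"

lemma frame_V:
  fixes R :: "'u ring"
  assumes F: "contravariant_functor_Ring Fo Fm" and Sp: "restricts_to_Spec Fo Fm eta"
    and x: "x \<in> Fo R" and fr: "frame R e1 e2 e3"
  shows "ex1 (V Fo Fm eta R x e1) (V Fo Fm eta R x e2) (V Fo Fm eta R x e3)"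
proof -
  interpret frame R e1 e2 e3 by fact
  let ?A = "frameS R e1 e2 e3"
  let ?P = "eta (R\<lparr>carrier:=?A\<rparr>) (Fm (R\<lparr>carrier:=?A\<rparr>) R (restrict (\<lambda>a. a) ?A) x)"
  have key: "V Fo Fm eta R x e \<longleftrightarrow> e \<notin> ?P" if e: "e \<in> ?A" "e \<otimes>\<^bsub>R\<^esub> e = e" for e
  proof -
    have ec: "e \<in> carrier R" using e subringE(1)[OF sub] by auto
    interpret D: frame R e "\<one>\<^bsub>R\<^esub> \<ominus>\<^bsub>R\<^esub> e" "\<zero>\<^bsub>R\<^esub>" by (rule idem_frame) (use ec e char2 ring_axioms in auto)
    have sub': "DS R e \<subseteq> ?A"
    proof
      fix z assume "z \<in> DS R e"
      then obtain a b c where z: "z = lin R e (\<one>\<^bsub>R\<^esub> \<ominus>\<^bsub>R\<^esub> e) \<zero>\<^bsub>R\<^esub> a b c" unfolding DS_def frameS_def by auto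
      have "\<one>\<^bsub>R\<^esub> \<ominus>\<^bsub>R\<^esub> e \<in> ?A" using subringE[OF sub] e unfolding a_minus_def by auto
      then show "z \<in> ?A" unfolding z lin_def sel_def using subringE[OF sub] e by auto
    qed
    have eq: "eta (R\<lparr>carrier := DS R e\<rparr>) (Fm (R\<lparr>carrier := DS R e\<rparr>) R (restrict (\<lambda>a. a) (DS R e)) x) = ?P \<inter> DS R e"
      by (rule compat(1)[OF F Sp ring_axioms x sub comm]) (use D.sub D.comm sub' in \<open>auto simp: DS_def\<close>)
    have "e \<in> DS R e" using D.e_in unfolding DS_def by auto
    then show ?thesis unfolding V_def eq by auto
  qed
  have "?P \<in> Spec_set (R\<lparr>carrier:=?A\<rparr>)" by (rule compat(2)[OF F Sp ring_axioms x sub comm sub comm]) auto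
  then have "ex1 (e1 \<notin> ?P) (e2 \<notin> ?P) (e3 \<notin> ?P)" using prime_ex1 unfolding Spec_set_def by auto
  then show ?thesis using key e_in idem by simp
qed



instance bit :: finite
proof
  have "UNIV = {0::bit, 1}" using bit_not_zero_iff by auto
  then show "finite (UNIV :: bit set)" by (metis finite.emptyI finite.insertI)
qed

lemma bit_double: "(x::bit) + x = 0"
  by (cases "x = 0") (auto simp: bit_not_zero_iff)

abbreviation mk :: "bit \<Rightarrow> bit \<Rightarrow> bit \<Rightarrow> bit \<Rightarrow> bit \<Rightarrow> bit \<Rightarrow> bit \<Rightarrow> bit \<Rightarrow> bit \<Rightarrow> bit^3^3" where
 "mk a b c d e f g h i \<equiv> vector [vector [a,b,c], vector [d,e,f], vector [g,h,i]]"

lemma mm: "mk a b c d e f g h i ** mk a' b' c' d' e' f' g' h' i' =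
  mk (a*a'+b*d'+c*g') (a*b'+b*e'+c*h') (a*c'+b*f'+c*i')
     (d*a'+e*d'+f*g') (d*b'+e*e'+f*h') (d*c'+e*f'+f*i')
     (g*a'+h*d'+i*g') (g*b'+h*e'+i*h') (g*c'+h*f'+i*i')"
  by (simp add: vec_eq_iff forall_3 sum_3 matrix_matrix_mult_def)
lemma ma: "mk a b c d e f g h i + mk a' b' c' d' e' f' g' h' i' =
  mk (a+a') (b+b') (c+c') (d+d') (e+e') (f+f') (g+g') (h+h') (i+i')"
  by (simp add: vec_eq_iff forall_3)
lemma meq: "(mk a b c d e f g h i = mk a' b' c' d' e' f' g' h' i') = (a=a' \<and> b=b' \<and> c=c' \<and> d=d' \<and> e=e' \<and> f=f' \<and> g=g' \<and> h=h' \<and> i=i')"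
  by (auto simp add: vec_eq_iff forall_3)
lemma m0: "(0::bit^3^3) = mk 0 0 0 0 0 0 0 0 0" by (simp add: vec_eq_iff forall_3)
lemma m1: "(mat 1::bit^3^3) = mk 1 0 0 0 1 0 0 0 1" by (simp add: vec_eq_iff forall_3 mat_def)
lemma mall: "(A::bit^3^3) = mk (A$1$1) (A$1$2) (A$1$3) (A$2$1) (A$2$2) (A$2$3) (A$3$1) (A$3$2) (A$3$3)"
  by (simp add: vec_eq_iff forall_3)

definition M :: "(bit^3^3) ring" where
  "M = \<lparr>carrier = UNIV, monoid.mult = (**), one = mat 1, zero = 0, add = (+)\<rparr>"

lemma matrix_add_rdistrib: "((B + C) ** (A::bit^3^3)) = (B ** A) + (C ** A)"
  by (vector matrix_matrix_mult_def sum.distrib[symmetric] field_simps)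

lemma ringM: "ring M"
proof (rule ringI)
  show "abelian_group M"
    by (rule abelian_groupI) (auto simp: M_def add.assoc add.commute intro: exI[of _ "- _"])
  show "monoid M"
    by (rule monoidI) (auto simp: M_def matrix_mul_assoc)
qed (auto simp: M_def matrix_add_ldistrib matrix_add_rdistrib)

lemma nz: assumes "A \<noteq> (0::bit^3^3)"
  shows "\<exists>X1 Y1 X2 Y2 X3 Y3. X1**A**Y1 + X2**A**Y2 + X3**A**Y3 = (mat 1 :: bit^3^3)"
proof -
  obtain a b c d e f g h i where A: "A = mk a b c d e f g h i" using mall by blast
  have "\<not> (a = 0 \<and> b = 0 \<and> c = 0 \<and> d = 0 \<and> e = 0 \<and> f = 0 \<and> g = 0 \<and> h = 0 \<and> i = 0)"
    using assms A by (auto simp: m0 meq)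
  then consider "a = 1" | "b = 1" | "c = 1" | "d = 1" | "e = 1" | "f = 1" | "g = 1" | "h = 1" | "i = 1" using bit_not_zero_iff by blast
  then show ?thesis
  proof cases
    case 1
    have "(mk 1 0 0 0 0 0 0 0 0) ** mk a b c d e f g h i ** (mk 1 0 0 0 0 0 0 0 0) + (mk 0 0 0 1 0 0 0 0 0) ** mk a b c d e f g h i ** (mk 0 1 0 0 0 0 0 0 0) + (mk 0 0 0 0 0 0 1 0 0) ** mk a b c d e f g h i ** (mk 0 0 1 0 0 0 0 0 0) = mat 1"
      by (simp add: mm ma m1 \<open>a = 1\<close>)
    then show ?thesis unfolding A by blast
  next
    case 2
    have "(mk 1 0 0 0 0 0 0 0 0) ** mk a b c d e f g h i ** (mk 0 0 0 1 0 0 0 0 0) + (mk 0 0 0 1 0 0 0 0 0) ** mk a b c d e f g h i ** (mk 0 0 0 0 1 0 0 0 0) + (mk 0 0 0 0 0 0 1 0 0) ** mk a b c d e f g h i ** (mk 0 0 0 0 0 1 0 0 0) = mat 1"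
      by (simp add: mm ma m1 \<open>b = 1\<close>)
    then show ?thesis unfolding A by blast
  next
    case 3
    have "(mk 1 0 0 0 0 0 0 0 0) ** mk a b c d e f g h i ** (mk 0 0 0 0 0 0 1 0 0) + (mk 0 0 0 1 0 0 0 0 0) ** mk a b c d e f g h i ** (mk 0 0 0 0 0 0 0 1 0) + (mk 0 0 0 0 0 0 1 0 0) ** mk a b c d e f g h i ** (mk 0 0 0 0 0 0 0 0 1) = mat 1"
      by (simp add: mm ma m1 \<open>c = 1\<close>)
    then show ?thesis unfolding A by blast
  next
    case 4
    have "(mk 0 1 0 0 0 0 0 0 0) ** mk a b c d e f g h i ** (mk 1 0 0 0 0 0 0 0 0) + (mk 0 0 0 0 1 0 0 0 0) ** mk a b c d e f g h i ** (mk 0 1 0 0 0 0 0 0 0) + (mk 0 0 0 0 0 0 0 1 0) ** mk a b c d e f g h i ** (mk 0 0 1 0 0 0 0 0 0) = mat 1"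
      by (simp add: mm ma m1 \<open>d = 1\<close>)
    then show ?thesis unfolding A by blast
  next
    case 5
    have "(mk 0 1 0 0 0 0 0 0 0) ** mk a b c d e f g h i ** (mk 0 0 0 1 0 0 0 0 0) + (mk 0 0 0 0 1 0 0 0 0) ** mk a b c d e f g h i ** (mk 0 0 0 0 1 0 0 0 0) + (mk 0 0 0 0 0 0 0 1 0) ** mk a b c d e f g h i ** (mk 0 0 0 0 0 1 0 0 0) = mat 1"
      by (simp add: mm ma m1 \<open>e = 1\<close>)
    then show ?thesis unfolding A by blast
  next
    case 6
    have "(mk 0 1 0 0 0 0 0 0 0) ** mk a b c d e f g h i ** (mk 0 0 0 0 0 0 1 0 0) + (mk 0 0 0 0 1 0 0 0 0) ** mk a b c d e f g h i ** (mk 0 0 0 0 0 0 0 1 0) + (mk 0 0 0 0 0 0 0 1 0) ** mk a b c d e f g h i ** (mk 0 0 0 0 0 0 0 0 1) = mat 1"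
      by (simp add: mm ma m1 \<open>f = 1\<close>)
    then show ?thesis unfolding A by blast
  next
    case 7
    have "(mk 0 0 1 0 0 0 0 0 0) ** mk a b c d e f g h i ** (mk 1 0 0 0 0 0 0 0 0) + (mk 0 0 0 0 0 1 0 0 0) ** mk a b c d e f g h i ** (mk 0 1 0 0 0 0 0 0 0) + (mk 0 0 0 0 0 0 0 0 1) ** mk a b c d e f g h i ** (mk 0 0 1 0 0 0 0 0 0) = mat 1"
      by (simp add: mm ma m1 \<open>g = 1\<close>)
    then show ?thesis unfolding A by blast
  next
    case 8
    have "(mk 0 0 1 0 0 0 0 0 0) ** mk a b c d e f g h i ** (mk 0 0 0 1 0 0 0 0 0) + (mk 0 0 0 0 0 1 0 0 0) ** mk a b c d e f g h i ** (mk 0 0 0 0 1 0 0 0 0) + (mk 0 0 0 0 0 0 0 0 1) ** mk a b c d e f g h i ** (mk 0 0 0 0 0 1 0 0 0) = mat 1"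
      by (simp add: mm ma m1 \<open>h = 1\<close>)
    then show ?thesis unfolding A by blast
  next
    case 9
    have "(mk 0 0 1 0 0 0 0 0 0) ** mk a b c d e f g h i ** (mk 0 0 0 0 0 0 1 0 0) + (mk 0 0 0 0 0 1 0 0 0) ** mk a b c d e f g h i ** (mk 0 0 0 0 0 0 0 1 0) + (mk 0 0 0 0 0 0 0 0 1) ** mk a b c d e f g h i ** (mk 0 0 0 0 0 0 0 0 1) = mat 1"
      by (simp add: mm ma m1 \<open>i = 1\<close>)
    then show ?thesis unfolding A by blast
  qed
qed

definition Rg :: "(bit^3^3 \<Rightarrow> 'u) \<Rightarrow> 'u ring" where "Rg g = image_ring g M"

definition frameM :: "bit^3^3 \<Rightarrow> bit^3^3 \<Rightarrow> bit^3^3 \<Rightarrow> bool" where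
  "frameM A B C \<longleftrightarrow> A ** B = 0 \<and> B ** A = 0 \<and> A ** C = 0 \<and> C ** A = 0 \<and> B ** C = 0 \<and> C ** B = 0
     \<and> A + B + C = mat 1"

context
  fixes g :: "bit^3^3 \<Rightarrow> 'u" assumes ig: "inj g"
begin

lemma Rg_ring: "ring (Rg g)"
  unfolding Rg_def by (rule ring.inj_imp_image_ring_is_ring[OF ringM]) (use ig in \<open>simp add: M_def\<close>)

lemma Rg_hom: "g \<in> ring_hom M (Rg g)"
  using inj_imp_image_ring_iso[of g M] ig unfolding Rg_def ring_iso_def by (auto simp: M_def)

lemma Rg_ops: "g A \<otimes>\<^bsub>Rg g\<^esub> g B = g (A ** B)" "g A \<oplus>\<^bsub>Rg g\<^esub> g B = g (A + B)"
  "\<one>\<^bsub>Rg g\<^esub> = g (mat 1)" "\<zero>\<^bsub>Rg g\<^esub> = g 0" "carrier (Rg g) = range g"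
proof -
  show "g A \<otimes>\<^bsub>Rg g\<^esub> g B = g (A ** B)" "g A \<oplus>\<^bsub>Rg g\<^esub> g B = g (A + B)" "\<one>\<^bsub>Rg g\<^esub> = g (mat 1)"
    using ring_hom_memE[OF Rg_hom] by (auto simp: M_def)
  show "\<zero>\<^bsub>Rg g\<^esub> = g 0" "carrier (Rg g) = range g"
    by (simp_all add: Rg_def image_ring_zero image_ring_carrier M_def)
qed

lemma Rg_char2: "x \<in> carrier (Rg g) \<Longrightarrow> x \<oplus>\<^bsub>Rg g\<^esub> x = \<zero>\<^bsub>Rg g\<^esub>"
proof -
  assume "x \<in> carrier (Rg g)"
  then obtain A where "x = g A" by (auto simp: Rg_ops)
  moreover have "A + A = 0" by (simp add: vec_eq_iff bit_double)
  ultimately show ?thesis by (simp add: Rg_ops)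
qed

lemma gframe: "frameM A B C \<Longrightarrow> frame (Rg g) (g A) (g B) (g C)"
  unfolding frameM_def
  by (intro frame.intro frame_axioms.intro Rg_ring Rg_char2) (auto simp: Rg_ops)

lemma spec0: "{\<zero>\<^bsub>Rg g\<^esub>} \<in> Spec_set (Rg g)"
proof -
  interpret R: ring "Rg g" by (rule Rg_ring)
  have ne: "\<one>\<^bsub>Rg g\<^esub> \<noteq> \<zero>\<^bsub>Rg g\<^esub>"
    using ig by (simp add: Rg_ops inj_eq m0 m1 meq)
  have one: "\<one>\<^bsub>Rg g\<^esub> \<in> I" if I: "ideal I (Rg g)" and nsub: "\<not> I \<subseteq> {\<zero>\<^bsub>Rg g\<^esub>}" for I
  proof -
    interpret I: ideal I "Rg g" by (rule I)
    obtain a where a: "a \<in> I" "a \<noteq> \<zero>\<^bsub>Rg g\<^esub>" using nsub by auto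
    then obtain A where A: "a = g A" using subsetD[OF I.a_subset a(1)] by (auto simp: Rg_ops)
    then have "A \<noteq> 0" using a by (auto simp: Rg_ops)
    then obtain X1 Y1 X2 Y2 X3 Y3 where X: "X1**A**Y1 + X2**A**Y2 + X3**A**Y3 = (mat 1 :: bit^3^3)" using nz by blast
    have gc: "\<And>X. g X \<in> carrier (Rg g)" by (simp add: Rg_ops)
    have aI: "g A \<in> I" using a A by simp
    have XY: "g (X ** A ** Y) \<in> I" for X Y
    proof -
      have "g X \<otimes>\<^bsub>Rg g\<^esub> g A \<in> I" by (rule I.I_l_closed[OF aI gc])
      then have "(g X \<otimes>\<^bsub>Rg g\<^esub> g A) \<otimes>\<^bsub>Rg g\<^esub> g Y \<in> I" by (rule I.I_r_closed[OF _ gc])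
      then show ?thesis by (simp add: Rg_ops)
    qed
    have "g (X1**A**Y1) \<in> I" "g (X2**A**Y2) \<in> I" "g (X3**A**Y3) \<in> I" by (rule XY)+
    then have "g (X1**A**Y1) \<oplus>\<^bsub>Rg g\<^esub> g (X2**A**Y2) \<oplus>\<^bsub>Rg g\<^esub> g (X3**A**Y3) \<in> I"
      by (intro I.a_closed)
    then show ?thesis using X by (simp add: Rg_ops)
  qed
  show ?thesis unfolding Spec_set_def prime_ideal_nc_def
  proof (intro CollectI conjI allI impI R.zeroideal)
    show "{\<zero>\<^bsub>Rg g\<^esub>} \<noteq> carrier (Rg g)" using ne R.one_closed by blast
    fix I J assume I: "ideal I (Rg g)" and J: "ideal J (Rg g)" and p: "ideal_prod (Rg g) I J \<subseteq> {\<zero>\<^bsub>Rg g\<^esub>}"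
    show "I \<subseteq> {\<zero>\<^bsub>Rg g\<^esub>} \<or> J \<subseteq> {\<zero>\<^bsub>Rg g\<^esub>}"
    proof (rule ccontr)
      assume "\<not> ?thesis"
      then have "\<one>\<^bsub>Rg g\<^esub> \<in> I" "\<one>\<^bsub>Rg g\<^esub> \<in> J" using one I J by auto
      then have "\<one>\<^bsub>Rg g\<^esub> \<otimes>\<^bsub>Rg g\<^esub> \<one>\<^bsub>Rg g\<^esub> \<in> ideal_prod (Rg g) I J" by (rule ideal_prod.prod)
      then show False using p ne by auto
    qed
  qed
qed

end

theorem corollary4p4:
  assumes "\<exists>f :: complex \<Rightarrow> 'u. inj f"
  shows "\<not> (\<exists>(Fo :: 'u ring \<Rightarrow> 'v set) Fm eta.
              contravariant_functor_Ring Fo Fm \<and>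
              restricts_to_Spec Fo Fm eta \<and>
              (\<forall>R. ring R \<longrightarrow> (\<exists>b. bij_betw b (Fo R) (Spec_set R))))"
proof
  assume "\<exists>(Fo :: 'u ring \<Rightarrow> 'v set) Fm eta.
              contravariant_functor_Ring Fo Fm \<and>
              restricts_to_Spec Fo Fm eta \<and>
              (\<forall>R. ring R \<longrightarrow> (\<exists>b. bij_betw b (Fo R) (Spec_set R)))"
  then obtain Fo :: "'u ring \<Rightarrow> 'v set" and Fm eta where F: "contravariant_functor_Ring Fo Fm"
    and Sp: "restricts_to_Spec Fo Fm eta"
    and bj: "\<And>R. ring R \<Longrightarrow> \<exists>b. bij_betw b (Fo R) (Spec_set R)" by blast
  obtain f :: "complex \<Rightarrow> 'u" where f: "inj f" using assms by blast
  define g where "g = f \<circ> (of_nat :: nat \<Rightarrow> complex) \<circ> to_nat_on (UNIV :: (bit^3^3) set)"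
  have fin: "finite (UNIV :: (bit^3^3) set)" by simp
  have ig: "inj g" unfolding g_def
    by (intro inj_compose f inj_of_nat inj_on_to_nat_on countable_finite fin)
  obtain bb where "bij_betw bb (Fo (Rg g)) (Spec_set (Rg g))" using bj[OF Rg_ring[OF ig]] by blast
  then obtain x where x: "x \<in> Fo (Rg g)" using spec0[OF ig] unfolding bij_betw_def by blast
  have f0: "ex1 (V Fo Fm eta (Rg g) x (g (mk 0 0 0 0 0 0 0 0 1))) (V Fo Fm eta (Rg g) x (g (mk 0 0 0 0 1 0 0 0 0))) (V Fo Fm eta (Rg g) x (g (mk 1 0 0 0 0 0 0 0 0)))"
    by (rule frame_V[OF F Sp x gframe[OF ig]]) (simp add: frameM_def mm ma m0 m1)
  have f1: "ex1 (V Fo Fm eta (Rg g) x (g (mk 0 0 0 0 0 0 0 0 1))) (V Fo Fm eta (Rg g) x (g (mk 0 0 0 1 1 0 0 0 0))) (V Fo Fm eta (Rg g) x (g (mk 1 0 0 1 0 0 0 0 0)))"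
    by (rule frame_V[OF F Sp x gframe[OF ig]]) (simp add: frameM_def mm ma m0 m1)
  have f2: "ex1 (V Fo Fm eta (Rg g) x (g (mk 0 0 0 0 0 0 0 0 1))) (V Fo Fm eta (Rg g) x (g (mk 0 1 0 0 1 0 0 0 0))) (V Fo Fm eta (Rg g) x (g (mk 1 1 0 0 0 0 0 0 0)))"
    by (rule frame_V[OF F Sp x gframe[OF ig]]) (simp add: frameM_def mm ma m0 m1)
  have f3: "ex1 (V Fo Fm eta (Rg g) x (g (mk 0 0 0 0 0 0 0 1 1))) (V Fo Fm eta (Rg g) x (g (mk 0 0 0 0 1 0 0 1 0))) (V Fo Fm eta (Rg g) x (g (mk 1 0 0 0 0 0 0 0 0)))"
    by (rule frame_V[OF F Sp x gframe[OF ig]]) (simp add: frameM_def mm ma m0 m1)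
  have f4: "ex1 (V Fo Fm eta (Rg g) x (g (mk 0 0 0 0 0 0 0 1 1))) (V Fo Fm eta (Rg g) x (g (mk 0 0 0 1 1 0 1 1 0))) (V Fo Fm eta (Rg g) x (g (mk 1 0 0 1 0 0 1 0 0)))"
    by (rule frame_V[OF F Sp x gframe[OF ig]]) (simp add: frameM_def mm ma m0 m1)
  have f5: "ex1 (V Fo Fm eta (Rg g) x (g (mk 0 0 0 0 0 0 0 1 1))) (V Fo Fm eta (Rg g) x (g (mk 0 1 0 0 1 0 0 1 0))) (V Fo Fm eta (Rg g) x (g (mk 1 1 0 0 0 0 0 0 0)))"
    by (rule frame_V[OF F Sp x gframe[OF ig]]) (simp add: frameM_def mm ma m0 m1)
  have f6: "ex1 (V Fo Fm eta (Rg g) x (g (mk 0 0 0 0 0 0 1 0 1))) (V Fo Fm eta (Rg g) x (g (mk 0 0 0 0 1 0 0 0 0))) (V Fo Fm eta (Rg g) x (g (mk 1 0 0 0 0 0 1 0 0)))"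
    by (rule frame_V[OF F Sp x gframe[OF ig]]) (simp add: frameM_def mm ma m0 m1)
  have f7: "ex1 (V Fo Fm eta (Rg g) x (g (mk 0 0 0 0 0 0 1 0 1))) (V Fo Fm eta (Rg g) x (g (mk 0 0 0 1 1 0 0 0 0))) (V Fo Fm eta (Rg g) x (g (mk 1 0 0 1 0 0 1 0 0)))"
    by (rule frame_V[OF F Sp x gframe[OF ig]]) (simp add: frameM_def mm ma m0 m1)
  have f8: "ex1 (V Fo Fm eta (Rg g) x (g (mk 0 0 0 0 0 0 1 0 1))) (V Fo Fm eta (Rg g) x (g (mk 0 1 0 0 1 0 0 1 0))) (V Fo Fm eta (Rg g) x (g (mk 1 1 0 0 0 0 1 1 0)))"
    by (rule frame_V[OF F Sp x gframe[OF ig]]) (simp add: frameM_def mm ma m0 m1)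
  have f9: "ex1 (V Fo Fm eta (Rg g) x (g (mk 0 0 0 0 0 0 1 1 1))) (V Fo Fm eta (Rg g) x (g (mk 0 0 0 0 1 0 0 1 0))) (V Fo Fm eta (Rg g) x (g (mk 1 0 0 0 0 0 1 0 0)))"
    by (rule frame_V[OF F Sp x gframe[OF ig]]) (simp add: frameM_def mm ma m0 m1)
  have f10: "ex1 (V Fo Fm eta (Rg g) x (g (mk 0 0 0 0 0 0 1 1 1))) (V Fo Fm eta (Rg g) x (g (mk 0 0 0 1 1 0 1 1 0))) (V Fo Fm eta (Rg g) x (g (mk 1 0 0 1 0 0 0 0 0)))"
    by (rule frame_V[OF F Sp x gframe[OF ig]]) (simp add: frameM_def mm ma m0 m1)
  have f11: "ex1 (V Fo Fm eta (Rg g) x (g (mk 0 0 0 0 0 0 1 1 1))) (V Fo Fm eta (Rg g) x (g (mk 0 1 0 0 1 0 0 0 0))) (V Fo Fm eta (Rg g) x (g (mk 1 1 0 0 0 0 1 1 0)))"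
    by (rule frame_V[OF F Sp x gframe[OF ig]]) (simp add: frameM_def mm ma m0 m1)
  have f12: "ex1 (V Fo Fm eta (Rg g) x (g (mk 0 0 0 0 0 1 0 0 1))) (V Fo Fm eta (Rg g) x (g (mk 0 0 0 0 1 1 0 0 0))) (V Fo Fm eta (Rg g) x (g (mk 1 0 0 0 0 0 0 0 0)))"
    by (rule frame_V[OF F Sp x gframe[OF ig]]) (simp add: frameM_def mm ma m0 m1)
  have f13: "ex1 (V Fo Fm eta (Rg g) x (g (mk 0 0 0 0 0 1 0 0 1))) (V Fo Fm eta (Rg g) x (g (mk 0 0 0 1 1 1 0 0 0))) (V Fo Fm eta (Rg g) x (g (mk 1 0 0 1 0 0 0 0 0)))"
    by (rule frame_V[OF F Sp x gframe[OF ig]]) (simp add: frameM_def mm ma m0 m1)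
  have f14: "ex1 (V Fo Fm eta (Rg g) x (g (mk 0 0 0 0 0 1 0 0 1))) (V Fo Fm eta (Rg g) x (g (mk 0 1 1 0 1 1 0 0 0))) (V Fo Fm eta (Rg g) x (g (mk 1 1 1 0 0 0 0 0 0)))"
    by (rule frame_V[OF F Sp x gframe[OF ig]]) (simp add: frameM_def mm ma m0 m1)
  have f15: "ex1 (V Fo Fm eta (Rg g) x (g (mk 0 0 0 0 1 0 0 0 0))) (V Fo Fm eta (Rg g) x (g (mk 0 0 1 0 0 0 0 0 1))) (V Fo Fm eta (Rg g) x (g (mk 1 0 1 0 0 0 0 0 0)))"
    by (rule frame_V[OF F Sp x gframe[OF ig]]) (simp add: frameM_def mm ma m0 m1)
  have f16: "ex1 (V Fo Fm eta (Rg g) x (g (mk 0 0 0 0 1 0 0 1 0))) (V Fo Fm eta (Rg g) x (g (mk 0 1 1 0 0 0 0 1 1))) (V Fo Fm eta (Rg g) x (g (mk 1 1 1 0 0 0 0 0 0)))"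
    by (rule frame_V[OF F Sp x gframe[OF ig]]) (simp add: frameM_def mm ma m0 m1)
  have f17: "ex1 (V Fo Fm eta (Rg g) x (g (mk 0 0 0 0 1 1 0 0 0))) (V Fo Fm eta (Rg g) x (g (mk 0 0 0 1 0 1 1 0 1))) (V Fo Fm eta (Rg g) x (g (mk 1 0 0 1 0 0 1 0 0)))"
    by (rule frame_V[OF F Sp x gframe[OF ig]]) (simp add: frameM_def mm ma m0 m1)
  have f18: "ex1 (V Fo Fm eta (Rg g) x (g (mk 0 0 0 0 1 1 0 0 0))) (V Fo Fm eta (Rg g) x (g (mk 0 0 1 0 0 1 0 0 1))) (V Fo Fm eta (Rg g) x (g (mk 1 0 1 0 0 0 0 0 0)))"
    by (rule frame_V[OF F Sp x gframe[OF ig]]) (simp add: frameM_def mm ma m0 m1)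
  have f19: "ex1 (V Fo Fm eta (Rg g) x (g (mk 0 0 0 1 0 1 1 0 1))) (V Fo Fm eta (Rg g) x (g (mk 0 0 0 1 1 1 0 0 0))) (V Fo Fm eta (Rg g) x (g (mk 1 0 0 0 0 0 1 0 0)))"
    by (rule frame_V[OF F Sp x gframe[OF ig]]) (simp add: frameM_def mm ma m0 m1)
  have f20: "ex1 (V Fo Fm eta (Rg g) x (g (mk 0 0 0 1 0 1 1 0 1))) (V Fo Fm eta (Rg g) x (g (mk 0 1 1 0 0 0 0 1 1))) (V Fo Fm eta (Rg g) x (g (mk 1 1 1 1 1 1 1 1 1)))"
    by (rule frame_V[OF F Sp x gframe[OF ig]]) (simp add: frameM_def mm ma m0 m1)
  have f21: "ex1 (V Fo Fm eta (Rg g) x (g (mk 0 0 0 1 1 0 0 0 0))) (V Fo Fm eta (Rg g) x (g (mk 0 0 1 0 0 1 0 0 1))) (V Fo Fm eta (Rg g) x (g (mk 1 0 1 1 0 1 0 0 0)))"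
    by (rule frame_V[OF F Sp x gframe[OF ig]]) (simp add: frameM_def mm ma m0 m1)
  have f22: "ex1 (V Fo Fm eta (Rg g) x (g (mk 0 0 0 1 1 0 1 1 0))) (V Fo Fm eta (Rg g) x (g (mk 0 1 1 0 1 1 0 0 0))) (V Fo Fm eta (Rg g) x (g (mk 1 1 1 1 1 1 1 1 1)))"
    by (rule frame_V[OF F Sp x gframe[OF ig]]) (simp add: frameM_def mm ma m0 m1)
  have f23: "ex1 (V Fo Fm eta (Rg g) x (g (mk 0 0 0 1 1 1 0 0 0))) (V Fo Fm eta (Rg g) x (g (mk 0 0 1 0 0 0 0 0 1))) (V Fo Fm eta (Rg g) x (g (mk 1 0 1 1 0 1 0 0 0)))"
    by (rule frame_V[OF F Sp x gframe[OF ig]]) (simp add: frameM_def mm ma m0 m1)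
  have f24: "ex1 (V Fo Fm eta (Rg g) x (g (mk 0 0 1 0 0 0 0 0 1))) (V Fo Fm eta (Rg g) x (g (mk 0 1 0 0 1 0 0 0 0))) (V Fo Fm eta (Rg g) x (g (mk 1 1 1 0 0 0 0 0 0)))"
    by (rule frame_V[OF F Sp x gframe[OF ig]]) (simp add: frameM_def mm ma m0 m1)
  have f25: "ex1 (V Fo Fm eta (Rg g) x (g (mk 0 0 1 0 0 1 0 0 1))) (V Fo Fm eta (Rg g) x (g (mk 0 1 1 0 1 1 0 0 0))) (V Fo Fm eta (Rg g) x (g (mk 1 1 0 0 0 0 0 0 0)))"
    by (rule frame_V[OF F Sp x gframe[OF ig]]) (simp add: frameM_def mm ma m0 m1)
  have f26: "ex1 (V Fo Fm eta (Rg g) x (g (mk 0 1 0 0 1 0 0 1 0))) (V Fo Fm eta (Rg g) x (g (mk 0 1 1 0 0 0 0 1 1))) (V Fo Fm eta (Rg g) x (g (mk 1 0 1 0 0 0 0 0 0)))"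
    by (rule frame_V[OF F Sp x gframe[OF ig]]) (simp add: frameM_def mm ma m0 m1)
  have f27: "ex1 (V Fo Fm eta (Rg g) x (g (mk 1 0 1 1 0 1 0 0 0))) (V Fo Fm eta (Rg g) x (g (mk 1 1 0 0 0 0 1 1 0))) (V Fo Fm eta (Rg g) x (g (mk 1 1 1 1 1 1 1 1 1)))"
    by (rule frame_V[OF F Sp x gframe[OF ig]]) (simp add: frameM_def mm ma m0 m1)
  show False using f0 f1 f2 f3 f4 f5 f6 f7 f8 f9 f10 f11 f12 f13 f14 f15 f16 f17 f18 f19 f20 f21 f22 f23 f24 f25 f26 f27 unfolding ex1_def by sat
qed

end
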